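(* For every tournament $T$ on $N$ nodes and every positive integer $k \le N$, the auxiliary bipartite digraph $G(T)$ contains no directed cycle of length $2$ (digon) and no directed cycle of length $4$.
   Context: Let $T=(V,E)$ be a tournament on $N$ nodes and let $k \le N$ be a positive integer. The auxiliary bipartite digraph $G(T)$ has vertex set $R \cup C$, where $R$ contains one vertex for each node of $T$ and $C$ contains one vertex for each $k$-element subset of $V$. Its arcs are: for each $X = \{v_1,\dots,v_k\} \in C$, the arcs $(v_i, X)$ for $1 \le i \le k$; and for each $u \in R$ and $X \in C$, the arc $(X, u)$ if and only if $(u, v_i) \in E$ for all $v_i \in X$. *)

theory Defs
  imports Main
begin

definition tournament :: "'a set \<Rightarrow> ('a \<times> 'a) set \<Rightarrow> bool" where
  "tournament V E \<longleftrightarrow> finite V \<and> E \<subseteq> V \<times> V \<and>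
     (\<forall>v\<in>V. (v, v) \<notin> E) \<and>
     (\<forall>u\<in>V. \<forall>v\<in>V. u \<noteq> v \<longrightarrow> ((u, v) \<in> E \<longleftrightarrow> (v, u) \<notin> E))"

text \<open>Auxiliary bipartite digraph G(T): vertices Inl v (the set R, one per node) and
Inr X (the set C, one per k-element subset X of V).\<close>
definition aux_vertices :: "'a set \<Rightarrow> nat \<Rightarrow> ('a + 'a set) set" where
  "aux_vertices V k = Inl ` V \<union> Inr ` {X. X \<subseteq> V \<and> card X = k}"

definition aux_arcs :: "'a set \<Rightarrow> ('a \<times> 'a) set \<Rightarrow> nat \<Rightarrow> (('a + 'a set) \<times> ('a + 'a set)) set" where
  "aux_arcs V E k =
     {(Inl v, Inr X) | v X. X \<subseteq> V \<and> card X = k \<and> v \<in> X} \<union>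
     {(Inr X, Inl u) | u X. X \<subseteq> V \<and> card X = k \<and> u \<in> V \<and> (\<forall>v\<in>X. (u, v) \<in> E)}"

definition directed_cycle :: "'b set \<Rightarrow> ('b \<times> 'b) set \<Rightarrow> nat \<Rightarrow> 'b list \<Rightarrow> bool" where
  "directed_cycle W A n ws \<longleftrightarrow> length ws = n \<and> distinct ws \<and> set ws \<subseteq> W \<and>
     (\<forall>i<n. (ws ! i, ws ! ((i + 1) mod n)) \<in> A)"

end

theory Submission
  imports Defs
begin

lemma four_aux:
  assumes T: "tournament V E"
    and "(Inl v1, Inr X1) \<in> aux_arcs V E k" "(Inr X1, Inl v2) \<in> aux_arcs V E k"
        "(Inl v2, Inr X2) \<in> aux_arcs V E k" "(Inr X2, Inl v1) \<in> aux_arcs V E k"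
        "v1 \<noteq> v2"
  shows False
proof -
  from assms(2-5) have "v1 \<in> X1" "v2 \<in> X2" "\<forall>x\<in>X1. (v2,x)\<in>E" "\<forall>x\<in>X2. (v1,x)\<in>E"
    "v1 \<in> V" "v2 \<in> V"
    by (auto simp: aux_arcs_def)
  then have "(v2,v1)\<in>E" "(v1,v2)\<in>E" by auto
  with T \<open>v1 \<in> V\<close> \<open>v2 \<in> V\<close> \<open>v1 \<noteq> v2\<close> show False unfolding tournament_def by blast
qed

lemma len4: "length ws = 4 \<Longrightarrow> \<exists>a b c e. ws = [a,b,c,e]"
  by (cases ws; simp; rename_tac l1; case_tac l1; simp; rename_tac l2; case_tac l2; simp;
      rename_tac l3; case_tac l3; simp)

lemma arc_cases:
  "(p,q) \<in> aux_arcs V E k \<Longrightarrow> (\<exists>v X. p = Inl v \<and> q = Inr X) \<or> (\<exists>v X. p = Inr X \<and> q = Inl v)"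
  by (auto simp: aux_arcs_def)

theorem lemma2:
  fixes V :: "'a set" and E :: "('a \<times> 'a) set" and N k :: nat
  assumes "tournament V E" and "card V = N" and "0 < k" and "k \<le> N"
  shows "\<not> (\<exists>ws. directed_cycle (aux_vertices V k) (aux_arcs V E k) 2 ws) \<and>
         \<not> (\<exists>ws. directed_cycle (aux_vertices V k) (aux_arcs V E k) 4 ws)"
proof
  show "\<not> (\<exists>ws. directed_cycle (aux_vertices V k) (aux_arcs V E k) 2 ws)"
  proof
    assume "\<exists>ws. directed_cycle (aux_vertices V k) (aux_arcs V E k) 2 ws"
    then obtain a b where ab: "(a,b) \<in> aux_arcs V E k" "(b,a) \<in> aux_arcs V E k"
    proof -
      from \<open>\<exists>ws. _\<close> obtain ws where "directed_cycle (aux_vertices V k) (aux_arcs V E k) 2 ws" by blast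
      then have "(ws!0, ws!1) \<in> aux_arcs V E k" "(ws!1, ws!0) \<in> aux_arcs V E k"
        unfolding directed_cycle_def by (auto dest: spec[of _ 0] spec[of _ 1])
      then show ?thesis using that by blast
    qed
    then show False using assms(1) unfolding aux_arcs_def tournament_def by auto
  qed
next
  show "\<not> (\<exists>ws. directed_cycle (aux_vertices V k) (aux_arcs V E k) 4 ws)"
  proof
    assume "\<exists>ws. directed_cycle (aux_vertices V k) (aux_arcs V E k) 4 ws"
    then obtain ws where d: "directed_cycle (aux_vertices V k) (aux_arcs V E k) 4 ws" by blast
    then have len: "length ws = 4" and dist: "distinct ws"
      and ar: "\<forall>i<4. (ws ! i, ws ! ((i + 1) mod 4)) \<in> aux_arcs V E k"
      unfolding directed_cycle_def by auto
    obtain a b c e where ws: "ws = [a,b,c,e]" using len4[OF len] by blast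
    have A: "(a,b) \<in> aux_arcs V E k" "(b,c) \<in> aux_arcs V E k" "(c,e) \<in> aux_arcs V E k" "(e,a) \<in> aux_arcs V E k"
      using ar[rule_format, of 0] ar[rule_format, of 1] ar[rule_format, of 2] ar[rule_format, of 3]
      by (auto simp: ws)
    have ne: "a \<noteq> c" "b \<noteq> e" using dist ws by auto
    show False
    proof (cases a)
      case (Inl v1)
      with A(1) obtain X1 where "b = Inr X1" by (auto simp: aux_arcs_def)
      with A(2) obtain v2 where "c = Inl v2" by (auto simp: aux_arcs_def)
      with A(3) obtain X2 where "e = Inr X2" by (auto simp: aux_arcs_def)
      show False using four_aux[OF assms(1), of v1 X1 k v2 X2] A ne Inl \<open>b = _\<close> \<open>c = _\<close> \<open>e = _\<close> by simp
    next
      case (Inr X1)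
      with A(1) obtain v1 where "b = Inl v1" by (auto simp: aux_arcs_def)
      with A(2) obtain X2 where "c = Inr X2" by (auto simp: aux_arcs_def)
      with A(3) obtain v2 where "e = Inl v2" by (auto simp: aux_arcs_def)
      show False using four_aux[OF assms(1), of v1 X2 k v2 X1] A ne Inr \<open>b = _\<close> \<open>c = _\<close> \<open>e = _\<close> by simp
    qed
  qed
qed

end
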